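(* Let $\mathcal{A} = \langle \Sigma, Q, \Delta, q_0\rangle$ be a substochastic automaton and $K$ a regular language over $Q \times \Sigma \times Q$ accepted by a deterministic finite automaton $\mathcal{K}=\langle Q \times \Sigma \times Q, Q_K, \Delta_K, q_K, F\rangle$. Then $\mathbf{P}_\mathcal{A}(K) = L^{\mathcal{A} \| \mathcal{K}}_{(q_0, q_K)}$.
   Context: A substochastic automaton (SA) is a tuple $\langle \Sigma, Q, \Delta, q_0\rangle$ with $\Sigma$ a finite alphabet, $Q$ a finite set of states, $q_0$ the initial state and $\Delta: Q \to ((\Sigma\times Q)\uplus\{\mathrm{stop}\}\to[0,1])$, where $\mathrm{stop}$ is a special termination action, such that $\sum_x \Delta(q)(x) \le 1$ for every $q$. A complete run from $q$ is a finite sequence $q \xrightarrow{a_1} q_1 \cdots \xrightarrow{a_n} q_n\,\mathrm{stop}$ of positive-probability transitions followed by termination; $CRun_q(\mathcal{A})$ denotes the set of complete runs from $q$ and $CRun(\mathcal{A}) = CRun_{q_0}(\mathcal{A})$. The weight of a complete run is $\mathbf{P}_\mathcal{A}(q\,\mathrm{stop}) = \Delta(q)(\mathrm{stop})$ and $\mathbf{P}_\mathcal{A}(q\xrightarrow{a}\rho) = \Delta(q)(a,r)\cdot\mathbf{P}_\mathcal{A}(\rho)$ with $r$ the first state of $\rho$. For an SA $\mathcal{B}$ and state $q$, $L^{\mathcal{B}}_q = \mathbf{P}_{\mathcal{B}}(CRun_q(\mathcal{B}))$. $\mathbf{P}_\mathcal{A}(K)$ is the sum of $\mathbf{P}_\mathcal{A}(\rho)$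 over complete runs $\rho\in CRun(\mathcal{A})$ whose sequence of transitions $(q_{i-1},a_i,q_i)$ forms a word in $K$. The synchronized product $\mathcal{A}\|\mathcal{K}$ is the SA $\langle \Sigma, Q\times Q_K, \Delta', (q_0,q_K)\rangle$ where, for $\mu = \Delta(q_1)$, $\Delta'(q_1,r_1) = \nu$ with $\nu(a,(q_2,r_2)) = \mu(a,q_2)$ if $r_1 \xrightarrow{(q_1,a,q_2)} r_2 \in \Delta_K$ and $0$ otherwise, and $\nu(\mathrm{stop}) = \mu(\mathrm{stop})$ if $r_1\in F$ and $0$ otherwise. *)

theory Defs
  imports "HOL-Analysis.Analysis"
begin

text \<open>The transition function Delta maps a state q to a function on actions, i.e. on
  (Sigma x Q) disjoint-union {stop}.\<close>
datatype ('s, 'q) act = Stop | Go 's 'q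

definition is_SA :: "'s set \<Rightarrow> 'q set \<Rightarrow> ('q \<Rightarrow> ('s, 'q) act \<Rightarrow> real) \<Rightarrow> 'q \<Rightarrow> bool" where
  "is_SA Sig Q Delta q0 \<longleftrightarrow>
     finite Sig \<and> finite Q \<and> q0 \<in> Q \<and>
     (\<forall>q\<in>Q.
        (\<forall>x. 0 \<le> Delta q x \<and> Delta q x \<le> 1) \<and>
        (\<forall>a r. (a \<notin> Sig \<or> r \<notin> Q) \<longrightarrow> Delta q (Go a r) = 0) \<and>
        Delta q Stop + (\<Sum>(a, r)\<in>Sig \<times> Q. Delta q (Go a r)) \<le> 1)"

text \<open>A run from q is represented by the list of steps (a_1,q_1),...,(a_n,q_n).\<close>
fun pos_path :: "('q \<Rightarrow> ('s, 'q) act \<Rightarrow> real) \<Rightarrow> 'q \<Rightarrow> ('s \<times> 'q) list \<Rightarrow> bool" where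
  "pos_path Delta q [] = True"
| "pos_path Delta q ((a, r) # xs) = (Delta q (Go a r) > 0 \<and> pos_path Delta r xs)"

fun end_state :: "'q \<Rightarrow> ('s \<times> 'q) list \<Rightarrow> 'q" where
  "end_state q [] = q"
| "end_state q ((a, r) # xs) = end_state r xs"

definition CRun :: "('q \<Rightarrow> ('s, 'q) act \<Rightarrow> real) \<Rightarrow> 'q \<Rightarrow> ('s \<times> 'q) list set" where
  "CRun Delta q = {xs. pos_path Delta q xs \<and> Delta (end_state q xs) Stop > 0}"

fun run_weight :: "('q \<Rightarrow> ('s, 'q) act \<Rightarrow> real) \<Rightarrow> 'q \<Rightarrow> ('s \<times> 'q) list \<Rightarrow> real" where
  "run_weight Delta q [] = Delta q Stop"
| "run_weight Delta q ((a, r) # xs) = Delta q (Go a r) * run_weight Delta r xs"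

fun trans_word :: "'q \<Rightarrow> ('s \<times> 'q) list \<Rightarrow> ('q \<times> 's \<times> 'q) list" where
  "trans_word q [] = []"
| "trans_word q ((a, r) # xs) = (q, a, r) # trans_word r xs"

definition L_SA :: "('q \<Rightarrow> ('s, 'q) act \<Rightarrow> real) \<Rightarrow> 'q \<Rightarrow> real" where
  "L_SA Delta q = (\<Sum>\<^sub>\<infinity>xs\<in>CRun Delta q. run_weight Delta q xs)"

definition P_lang :: "('q \<Rightarrow> ('s, 'q) act \<Rightarrow> real) \<Rightarrow> 'q \<Rightarrow> ('q \<times> 's \<times> 'q) list set \<Rightarrow> real" where
  "P_lang Delta q0 K = (\<Sum>\<^sub>\<infinity>xs\<in>{xs \<in> CRun Delta q0. trans_word q0 xs \<in> K}. run_weight Delta q0 xs)"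

definition is_DFA :: "'x set \<Rightarrow> 'k set \<Rightarrow> ('k \<times> 'x \<times> 'k) set \<Rightarrow> 'k \<Rightarrow> 'k set \<Rightarrow> bool" where
  "is_DFA Alph QK DK qK F \<longleftrightarrow>
     finite Alph \<and> finite QK \<and> qK \<in> QK \<and> F \<subseteq> QK \<and> DK \<subseteq> QK \<times> Alph \<times> QK \<and>
     (\<forall>r x r1 r2. (r, x, r1) \<in> DK \<longrightarrow> (r, x, r2) \<in> DK \<longrightarrow> r1 = r2)"

fun dfa_steps :: "('k \<times> 'x \<times> 'k) set \<Rightarrow> 'k \<Rightarrow> 'x list \<Rightarrow> 'k \<Rightarrow> bool" where
  "dfa_steps DK r [] r' = (r' = r)"
| "dfa_steps DK r (x # w) r' = (\<exists>r1. (r, x, r1) \<in> DK \<and> dfa_steps DK r1 w r')"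

definition dfa_lang :: "('k \<times> 'x \<times> 'k) set \<Rightarrow> 'k \<Rightarrow> 'k set \<Rightarrow> 'x list set" where
  "dfa_lang DK qK F = {w. \<exists>r\<in>F. dfa_steps DK qK w r}"

fun prod_delta :: "('q \<Rightarrow> ('s, 'q) act \<Rightarrow> real) \<Rightarrow> ('k \<times> ('q \<times> 's \<times> 'q) \<times> 'k) set \<Rightarrow> 'k set
                   \<Rightarrow> ('q \<times> 'k) \<Rightarrow> ('s, 'q \<times> 'k) act \<Rightarrow> real" where
  "prod_delta Delta DK F (q1, r1) Stop = (if r1 \<in> F then Delta q1 Stop else 0)"
| "prod_delta Delta DK F (q1, r1) (Go a (q2, r2)) =
     (if (r1, (q1, a, q2), r2) \<in> DK then Delta q1 (Go a q2) else 0)"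

end

theory Submission
  imports Defs
begin

definition proj :: "('s \<times> ('q \<times> 'k)) list \<Rightarrow> ('s \<times> 'q) list" where
  "proj = map (\<lambda>(a, (q, r)). (a, q))"

lemma proj_simps[simp]: "proj [] = []" "proj ((a, (q, r)) # ys) = (a, q) # proj ys"
  by (simp_all add: proj_def)

lemma l1:
  "pos_path (prod_delta Delta DK F) (q, r) ys \<Longrightarrow>
   pos_path Delta q (proj ys) \<and> end_state q (proj ys) = fst (end_state (q, r) ys) \<and>
   dfa_steps DK r (trans_word q (proj ys)) (snd (end_state (q, r) ys))"
proof (induction ys arbitrary: q r)
  case Nil then show ?case by simp
next
  case (Cons y ys)
  obtain a q' r' where y: "y = (a, (q', r'))" by (metis prod.exhaust)
  from Cons.prems y have p: "prod_delta Delta DK F (q, r) (Go a (q', r')) > 0"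
    and pp: "pos_path (prod_delta Delta DK F) (q', r') ys" by auto
  from p have d: "(r, (q, a, q'), r') \<in> DK" and dp: "Delta q (Go a q') > 0"
    by (auto split: if_splits)
  from Cons.IH[OF pp] show ?case using y d dp by auto
qed

lemma l2:
  "pos_path (prod_delta Delta DK F) (q, r) ys \<Longrightarrow>
   run_weight (prod_delta Delta DK F) (q, r) ys = (if snd (end_state (q, r) ys) \<in> F then run_weight Delta q (proj ys) else 0)"
proof (induction ys arbitrary: q r)
  case Nil then show ?case by simp
next
  case (Cons y ys)
  obtain a q' r' where y: "y = (a, (q', r'))" by (metis prod.exhaust)
  from Cons.prems y have p: "prod_delta Delta DK F (q, r) (Go a (q', r')) > 0"
    and pp: "pos_path (prod_delta Delta DK F) (q', r') ys" by auto
  from p have d: "(r, (q, a, q'), r') \<in> DK"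
    by (auto split: if_splits)
  from Cons.IH[OF pp] show ?case using y d by auto
qed

lemma l3:
  assumes det: "\<forall>r x r1 r2. (r, x, r1) \<in> DK \<longrightarrow> (r, x, r2) \<in> DK \<longrightarrow> r1 = r2"
  shows "pos_path (prod_delta Delta DK F) (q, r) ys \<Longrightarrow> pos_path (prod_delta Delta DK F) (q, r) zs \<Longrightarrow>
   proj ys = proj zs \<Longrightarrow> ys = zs"
proof (induction ys arbitrary: q r zs)
  case Nil then show ?case by (simp add: proj_def)
next
  case (Cons y ys)
  obtain a q' r' where y: "y = (a, (q', r'))" by (metis prod.exhaust)
  from Cons.prems(3) y obtain z zs' where zs: "zs = z # zs'" by (cases zs) (auto simp: proj_def)
  obtain b q'' r'' where z: "z = (b, (q'', r''))" by (metis prod.exhaust)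
  from Cons.prems(3) y zs z have e: "b = a" "q'' = q'" "proj ys = proj zs'" by auto
  from Cons.prems y have d1: "(r, (q, a, q'), r') \<in> DK" and pp: "pos_path (prod_delta Delta DK F) (q', r') ys"
    by (auto split: if_splits)
  from Cons.prems zs z e have d2: "(r, (q, a, q'), r'') \<in> DK" and pp2: "pos_path (prod_delta Delta DK F) (q', r'') zs'"
    by (auto split: if_splits)
  from det d1 d2 have "r'' = r'" by blast
  with Cons.IH[OF pp _ e(3)] pp2 show ?case using y zs z e by auto
qed

lemma l4:
  "pos_path Delta q xs \<Longrightarrow> dfa_steps DK r (trans_word q xs) r' \<Longrightarrow>
   \<exists>ys. pos_path (prod_delta Delta DK F) (q, r) ys \<and> proj ys = xs \<and> end_state (q, r) ys = (end_state q xs, r')"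
proof (induction xs arbitrary: q r)
  case Nil then show ?case by (intro exI[of _ "[]"]) simp
next
  case (Cons x xs)
  obtain a q' where x: "x = (a, q')" by (metis prod.exhaust)
  from Cons.prems x obtain r1 where d: "(r, (q, a, q'), r1) \<in> DK" and ds: "dfa_steps DK r1 (trans_word q' xs) r'"
    and dp: "Delta q (Go a q') > 0" and pp: "pos_path Delta q' xs" by auto
  from Cons.IH[OF pp ds] obtain ys where ys: "pos_path (prod_delta Delta DK F) (q', r1) ys"
    "proj ys = xs" "end_state (q', r1) ys = (end_state q' xs, r')" by blast
  show ?case using ys d dp x by (intro exI[of _ "(a, (q', r1)) # ys"]) auto
qed

theorem lemma2:
  fixes Sig :: "'s set" and Q :: "'q set" and Delta :: "'q \<Rightarrow> ('s, 'q) act \<Rightarrow> real" and q0 :: 'q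
    and QK :: "'k set" and DK :: "('k \<times> ('q \<times> 's \<times> 'q) \<times> 'k) set" and qK :: 'k and F :: "'k set"
  assumes "is_SA Sig Q Delta q0"
    and "is_DFA (Q \<times> Sig \<times> Q) QK DK qK F"
  shows "P_lang Delta q0 (dfa_lang DK qK F) = L_SA (prod_delta Delta DK F) (q0, qK)"
proof -
  have det: "\<forall>r x r1 r2. (r, x, r1) \<in> DK \<longrightarrow> (r, x, r2) \<in> DK \<longrightarrow> r1 = r2"
    using assms(2) by (simp add: is_DFA_def)
  let ?P = "prod_delta Delta DK F"
  let ?A = "CRun ?P (q0, qK)"
  have inj: "inj_on proj ?A"
    using l3[OF det] by (auto simp: inj_on_def CRun_def)
  have img: "{xs \<in> CRun Delta q0. trans_word q0 xs \<in> dfa_lang DK qK F} = proj ` ?A"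
  proof (intro set_eqI iffI)
    fix xs assume "xs \<in> {xs \<in> CRun Delta q0. trans_word q0 xs \<in> dfa_lang DK qK F}"
    then have pp: "pos_path Delta q0 xs" and st: "Delta (end_state q0 xs) Stop > 0"
      and "\<exists>r\<in>F. dfa_steps DK qK (trans_word q0 xs) r"
      by (auto simp: CRun_def dfa_lang_def)
    then obtain r where r: "r \<in> F" "dfa_steps DK qK (trans_word q0 xs) r" by blast
    from l4[OF pp r(2), of F] obtain ys where ys: "pos_path ?P (q0, qK) ys" "proj ys = xs"
      "end_state (q0, qK) ys = (end_state q0 xs, r)" by blast
    have "ys \<in> ?A" using ys st r(1) by (simp add: CRun_def)
    then show "xs \<in> proj ` ?A" using ys(2) by blast
  next
    fix xs assume "xs \<in> proj ` ?A"
    then obtain ys where ys: "ys \<in> ?A" "xs = proj ys" by blast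
    then have pp: "pos_path ?P (q0, qK) ys" and st: "?P (end_state (q0, qK) ys) Stop > 0"
      by (auto simp: CRun_def)
    obtain q1 r1 where e: "end_state (q0, qK) ys = (q1, r1)" by (metis prod.exhaust)
    from st e have "r1 \<in> F" "Delta q1 Stop > 0" by (auto split: if_splits)
    with l1[OF pp] e ys(2) show "xs \<in> {xs \<in> CRun Delta q0. trans_word q0 xs \<in> dfa_lang DK qK F}"
      by (auto simp: CRun_def dfa_lang_def)
  qed
  have w: "run_weight Delta q0 (proj ys) = run_weight ?P (q0, qK) ys" if "ys \<in> ?A" for ys
  proof -
    from that have pp: "pos_path ?P (q0, qK) ys" and st: "?P (end_state (q0, qK) ys) Stop > 0"
      by (auto simp: CRun_def)
    obtain q1 r1 where e: "end_state (q0, qK) ys = (q1, r1)" by (metis prod.exhaust)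
    from st e have "r1 \<in> F" by (auto split: if_splits)
    then show ?thesis using l2[OF pp] e by simp
  qed
  have "P_lang Delta q0 (dfa_lang DK qK F) = infsum (run_weight Delta q0) (proj ` ?A)"
    unfolding P_lang_def img ..
  also have "\<dots> = infsum (run_weight Delta q0 \<circ> proj) ?A"
    by (rule infsum_reindex[OF inj])
  also have "\<dots> = infsum (run_weight ?P (q0, qK)) ?A"
    by (rule infsum_cong) (simp add: w)
  finally show ?thesis unfolding L_SA_def .
qed

end
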